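(* Let $\alpha\in(0,\tfrac12)$. Then $h$, regarded as a function on $\mathbb T$ via $h(e^{i\theta})=h(\theta)$, satisfies $$|h(z_1)-h(z_2)|\le\cosh(\pi)\,d(z_1,z_2)^{1-2\alpha}\quad\text{for all }z_1,z_2\in\mathbb T.$$
   Context: $\mathbb T$ is the unit circle; for $\theta\in\mathbb R$, $|\theta|_o$ is the absolute value of the representative of $\theta$ mod $2\pi$ in $(-\pi,\pi]$; $d(e^{i\theta_1},e^{i\theta_2})=|\theta_1-\theta_2|_o$ is the geodesic distance. $h(\theta)=\sin\theta/|\theta|_o^{2\alpha}$ for $\theta\notin2\pi\mathbb Z$ and $h(\theta)=0$ for $\theta\in2\pi\mathbb Z$ (a $2\pi$-periodic function). *)

theory Defs
  imports "HOL-Analysis.Analysis"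
begin

text \<open>Absolute value of the representative of theta mod 2 pi in (-pi, pi].\<close>
definition absmod :: "real \<Rightarrow> real" where
  "absmod \<theta> = \<bar>\<theta> - 2 * pi * real_of_int \<lceil>(\<theta> - pi) / (2 * pi)\<rceil>\<bar>"

definition circ_dist :: "complex \<Rightarrow> complex \<Rightarrow> real" where
  "circ_dist z1 z2 = absmod (Arg z1 - Arg z2)"

definition h :: "real \<Rightarrow> real \<Rightarrow> real" where
  "h \<alpha> \<theta> = (if \<exists>k::int. \<theta> = 2 * pi * real_of_int k then 0
              else sin \<theta> / (absmod \<theta> powr (2 * \<alpha>)))"

definition hT :: "real \<Rightarrow> complex \<Rightarrow> real" where
  "hT \<alpha> z = h \<alpha> (Arg z)"

end

theory Submission
  imports Defs
begin

definition FF :: "real \<Rightarrow> real \<Rightarrow> real" where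
  "FF p t = sin t / (\<bar>t\<bar> powr p)"

lemma sin_lip: fixes x y :: real shows "\<bar>sin x - sin y\<bar> \<le> \<bar>x - y\<bar>"
proof -
  have "\<bar>sin x - sin y\<bar> = 2 * \<bar>sin ((x - y) / 2)\<bar> * \<bar>cos ((x + y) / 2)\<bar>"
    by (simp add: sin_diff_sin abs_mult)
  also have "\<dots> \<le> 2 * \<bar>(x - y) / 2\<bar> * 1"
    by (intro mult_mono abs_sin_x_le_abs_x abs_cos_le_one) auto
  finally show ?thesis by simp
qed

lemma FF_odd: "FF p (-t) = - FF p t"
  by (simp add: FF_def)

lemma FF_bound:
  assumes "0 \<le> p" "p < 1"
  shows "\<bar>FF p t\<bar> \<le> \<bar>t\<bar> powr (1 - p)"
proof (cases "t = 0")
  case True then show ?thesis by (simp add: FF_def)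
next
  case False
  have "\<bar>FF p t\<bar> = \<bar>sin t\<bar> / \<bar>t\<bar> powr p" by (simp add: FF_def abs_divide)
  also have "\<dots> \<le> \<bar>t\<bar> / \<bar>t\<bar> powr p"
    by (intro divide_right_mono abs_sin_le_one) (auto simp: abs_sin_x_le_abs_x)
  also have "\<dots> = \<bar>t\<bar> powr (1 - p)" using False by (simp add: powr_diff)
  finally show ?thesis .
qed

lemma FF_pos_case:
  assumes "0 \<le> p" "p < 1" "0 < y" "y < x"
  shows "\<bar>FF p x - FF p y\<bar> \<le> 2 * (x - y) powr (1 - p)"
proof -
  have xp: "x powr p > 0" "y powr p > 0" using assms by auto
  have id: "FF p x - FF p y = (sin x - sin y) / x powr p + sin y * (1 / x powr p - 1 / y powr p)"
    using assms xp by (simp add: FF_def field_simps)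
  have mono: "y powr p \<le> x powr p" using assms by (intro powr_mono2) auto
  have m2: "(x - y) powr p \<le> x powr p" using assms by (intro powr_mono2) auto
  have dp: "(x - y) powr p > 0" using assms by auto
  have key: "(x - y) / x powr p \<le> (x - y) powr (1 - p)"
  proof -
    have "(x - y) / x powr p \<le> (x - y) / (x - y) powr p"
      using assms m2 dp by (intro divide_left_mono) auto
    also have "\<dots> = (x - y) powr (1 - p)" using assms by (simp add: powr_diff)
    finally show ?thesis .
  qed
  have t1: "\<bar>(sin x - sin y) / x powr p\<bar> \<le> (x - y) / x powr p"
  proof -
    have "\<bar>sin x - sin y\<bar> \<le> \<bar>x - y\<bar>" by (rule sin_lip)
    then show ?thesis using xp assms by (simp add: abs_divide divide_right_mono)
  qed
  have ge: "1 / x powr p - 1 / y powr p \<le> 0" using xp mono by (simp add: frac_le)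
  have t2: "\<bar>sin y * (1 / x powr p - 1 / y powr p)\<bar> \<le> (x - y) / x powr p"
  proof -
    have "\<bar>sin y * (1 / x powr p - 1 / y powr p)\<bar> = \<bar>sin y\<bar> * (1 / y powr p - 1 / x powr p)"
      using ge by (simp add: abs_mult)
    also have "\<dots> \<le> y * (1 / y powr p - 1 / x powr p)"
      using ge assms abs_sin_x_le_abs_x[of y] by (intro mult_right_mono) auto
    also have "\<dots> = y powr (1 - p) - y / x powr p" using assms by (simp add: powr_diff field_simps)
    also have "\<dots> \<le> x powr (1 - p) - y / x powr p"
      using assms by (simp add: powr_mono2)
    also have "\<dots> = (x - y) / x powr p" using assms xp by (simp add: powr_diff field_simps)
    finally show ?thesis .
  qed
  show ?thesis unfolding id using t1 t2 key by linarith
qed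

lemma FF_nonneg_case:
  assumes "0 \<le> p" "p < 1" "0 \<le> y" "y \<le> x"
  shows "\<bar>FF p x - FF p y\<bar> \<le> 2 * (x - y) powr (1 - p)"
proof (cases "y = 0")
  case True
  have "\<bar>FF p x\<bar> \<le> \<bar>x\<bar> powr (1 - p)" using FF_bound assms by blast
  moreover have "\<bar>x\<bar> powr (1 - p) \<ge> 0" by simp
  moreover have "\<bar>x\<bar> powr (1 - p) \<le> 2 * \<bar>x\<bar> powr (1 - p)" by simp
  ultimately have "\<bar>FF p x\<bar> \<le> 2 * (x - 0) powr (1 - p)" using assms by simp
  then show ?thesis using True by (simp add: FF_def)
next
  case False
  then show ?thesis
  proof (cases "x = y")
    case True then show ?thesis by simp
  next
    case False
    then show ?thesis using FF_pos_case[of p y x] assms \<open>y \<noteq> 0\<close> by auto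
  qed
qed

lemma FF_holder:
  assumes "0 \<le> p" "p < 1"
  shows "\<bar>FF p x - FF p y\<bar> \<le> 2 * \<bar>x - y\<bar> powr (1 - p)"
proof -
  have sym: "\<bar>FF p x - FF p y\<bar> \<le> 2 * \<bar>x - y\<bar> powr (1 - p)" if "y \<le> x" for x y
  proof -
    consider "0 \<le> y" | "x \<le> 0" | "y < 0" "0 < x" by linarith
    then show ?thesis
    proof cases
      case 1 then show ?thesis using FF_nonneg_case[of p y x] assms that by auto
    next
      case 2
      have "\<bar>FF p (-y) - FF p (-x)\<bar> \<le> 2 * ((-y) - (-x)) powr (1 - p)"
        using FF_nonneg_case[of p "-x" "-y"] assms that 2 by auto
      then show ?thesis using that by (simp add: FF_odd)
    next
      case 3
      have a: "\<bar>FF p x\<bar> \<le> \<bar>x\<bar> powr (1 - p)" "\<bar>FF p y\<bar> \<le> \<bar>y\<bar> powr (1 - p)"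
        using FF_bound assms by blast+
      have b: "\<bar>x\<bar> powr (1 - p) \<le> \<bar>x - y\<bar> powr (1 - p)" "\<bar>y\<bar> powr (1 - p) \<le> \<bar>x - y\<bar> powr (1 - p)"
        using 3 assms by (auto intro!: powr_mono2)
      show ?thesis using a b by linarith
    qed
  qed
  show ?thesis
  proof (cases "y \<le> x")
    case True then show ?thesis using sym by blast
  next
    case False then show ?thesis using sym[of x y] by (simp add: abs_minus_commute)
  qed
qed

lemma absmod_small:
  assumes "-pi < t" "t \<le> pi"
  shows "absmod t = \<bar>t\<bar>"
proof -
  have "\<lceil>(t - pi) / (2 * pi)\<rceil> = 0"
    using assms by (simp add: ceiling_eq_iff field_simps)
  then show ?thesis by (simp add: absmod_def)
qed

lemma absmod_cases:
  assumes "-2*pi < t" "t < 2*pi"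
  shows "absmod t = \<bar>t\<bar> \<or> absmod t = \<bar>t - 2*pi\<bar> \<or> absmod t = \<bar>t + 2*pi\<bar>"
proof -
  define k where "k = \<lceil>(t - pi) / (2 * pi)\<rceil>"
  have "k < 2" unfolding k_def using assms by (simp add: ceiling_less_iff field_simps)
  moreover have "k > -2" unfolding k_def using assms by (simp add: less_ceiling_iff field_simps)
  ultimately have "k = 0 \<or> k = 1 \<or> k = -1" by linarith
  then show ?thesis unfolding absmod_def k_def[symmetric] by (auto simp: algebra_simps)
qed

lemma hT_FF:
  shows "hT \<alpha> z = FF (2 * \<alpha>) (Arg z)"
proof -
  have r: "-pi < Arg z" "Arg z \<le> pi" using Arg_bounded by auto
  show ?thesis
  proof (cases "\<exists>k::int. Arg z = 2 * pi * real_of_int k")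
    case True
    then obtain k :: int where k: "Arg z = 2 * pi * k" by blast
    have "k = 0"
    proof -
      have "2 * pi * k < 2 * pi * 1" using r k by linarith
      hence "k < 1" by simp
      moreover have "2 * pi * (-1) < 2 * pi * k" using r k by linarith
      hence "0 < pi * (real_of_int k + 1)" by (simp add: algebra_simps)
      hence "0 < real_of_int k + 1" using pi_gt_zero by (simp add: zero_less_mult_iff)
      hence "-1 < k" by linarith
      ultimately show ?thesis by linarith
    qed
    then show ?thesis using True k by (simp add: hT_def h_def FF_def)
  next
    case False
    then show ?thesis using absmod_small[OF r] by (simp add: hT_def h_def FF_def)
  qed
qed

lemma cosh_pi_ge: "4 \<le> cosh pi"
proof -
  have "exp 1 \<ge> (2::real)" using exp_ge_add_one_self[of 1] by simp
  have "exp (3::real) = exp 1 ^ 3" by (simp add: exp_of_nat_mult[symmetric])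
  also have "\<dots> \<ge> 2 ^ 3" using \<open>exp 1 \<ge> 2\<close> by (intro power_mono) auto
  finally have "exp 3 \<ge> (8::real)" by simp
  moreover have "exp 3 \<le> exp pi" using pi_gt3 by simp
  moreover have "exp (-pi) > 0" by simp
  ultimately have "8 \<le> exp pi + exp (-pi)" by linarith
  then show ?thesis by (simp add: cosh_def)
qed

theorem mainTheorem14:
  fixes \<alpha> :: real and z1 z2 :: complex
  assumes "0 < \<alpha>" and "\<alpha> < 1/2"
    and "cmod z1 = 1" and "cmod z2 = 1"
  shows "\<bar>hT \<alpha> z1 - hT \<alpha> z2\<bar> \<le> cosh pi * circ_dist z1 z2 powr (1 - 2 * \<alpha>)"
proof -
  define p where "p = 2 * \<alpha>"
  define a where "a = Arg z1"
  define b where "b = Arg z2"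
  have p: "0 \<le> p" "p < 1" using assms by (auto simp: p_def)
  have ra: "-pi < a" "a \<le> pi" unfolding a_def using Arg_bounded by auto
  have rb: "-pi < b" "b \<le> pi" unfolding b_def using Arg_bounded by auto
  define d where "d = absmod (a - b)"
  have lhs: "\<bar>hT \<alpha> z1 - hT \<alpha> z2\<bar> = \<bar>FF p a - FF p b\<bar>"
    by (simp add: hT_FF a_def b_def p_def)
  have F0: "FF p pi = 0" "FF p (-pi) = 0" by (simp_all add: FF_def)
  have dpos: "0 \<le> d powr (1 - p)" by simp
  have main: "\<bar>FF p a - FF p b\<bar> \<le> 4 * d powr (1 - p)"
  proof -
    have "-2*pi < a - b" "a - b < 2*pi" using ra rb by linarith+
    from absmod_cases[OF this] consider "d = \<bar>a - b\<bar>" | "d = \<bar>a - b - 2*pi\<bar>" | "d = \<bar>a - b + 2*pi\<bar>"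
      unfolding d_def by blast
    then show ?thesis
    proof cases
      case 1 then show ?thesis using FF_holder[OF p, of a b] dpos by simp
    next
      case 2
      have e1: "\<bar>FF p a - FF p pi\<bar> \<le> 2 * \<bar>a - pi\<bar> powr (1 - p)" by (rule FF_holder[OF p])
      have e2: "\<bar>FF p (-pi) - FF p b\<bar> \<le> 2 * \<bar>-pi - b\<bar> powr (1 - p)" by (rule FF_holder[OF p])
      have m1: "\<bar>a - pi\<bar> powr (1 - p) \<le> d powr (1 - p)"
        using 2 ra rb p by (intro powr_mono2) auto
      have m2: "\<bar>-pi - b\<bar> powr (1 - p) \<le> d powr (1 - p)"
        using 2 ra rb p by (intro powr_mono2) auto
      show ?thesis using e1 e2 m1 m2 F0 by linarith
    next
      case 3
      have e1: "\<bar>FF p a - FF p (-pi)\<bar> \<le> 2 * \<bar>a - (-pi)\<bar> powr (1 - p)" by (rule FF_holder[OF p])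
      have e2: "\<bar>FF p pi - FF p b\<bar> \<le> 2 * \<bar>pi - b\<bar> powr (1 - p)" by (rule FF_holder[OF p])
      have m1: "\<bar>a - (-pi)\<bar> powr (1 - p) \<le> d powr (1 - p)"
        using 3 ra rb p by (intro powr_mono2) auto
      have m2: "\<bar>pi - b\<bar> powr (1 - p) \<le> d powr (1 - p)"
        using 3 ra rb p by (intro powr_mono2) auto
      show ?thesis using e1 e2 m1 m2 F0 by linarith
    qed
  qed
  have "4 * d powr (1 - p) \<le> cosh pi * d powr (1 - p)"
    using cosh_pi_ge dpos by (intro mult_right_mono) auto
  then show ?thesis using lhs main unfolding circ_dist_def d_def a_def b_def p_def by linarith
qed

end
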